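(* Assume $p$ is odd and $\ell\ge2$. Every cuspidal or split semisimple regular representation of ${\rm SL}_2(\mathfrak o_\ell)$ admits a $\theta$-Whittaker model for every non-degenerate character $\theta$ of $\mathbf U(\mathfrak o_\ell)$.
   Context: $\mathfrak o$: ring of integers of a non-archimedean local field, uniformizer $\varpi$, residue field $\mathbb F_q$ of characteristic $p$; $\mathfrak o_r=\mathfrak o/\varpi^r\mathfrak o$. $\mathbf U(\mathfrak o_\ell)$ is the upper unitriangular subgroup of ${\rm SL}_2(\mathfrak o_\ell)$; a non-degenerate character is $\begin{pmatrix}1&u\\0&1\end{pmatrix}\mapsto\varphi_1(u)$ with $\varphi_1$ a character of $(\mathfrak o_\ell,+)$ nontrivial on $\varpi^{\ell-1}\mathfrak o_\ell$. Admitting a $\theta$-Whittaker model means $\mathrm{Hom}(\pi,\mathrm{Ind}_{\mathbf U(\mathfrak o_\ell)}^{{\rm SL}_2(\mathfrak o_\ell)}\theta)\ne0$. Let $K_\ell^{\ell-1}=\ker({\rm SL}_2(\mathfrak o_\ell)\to{\rm SL}_2(\mathfrak o_{\ell-1}))$; fixing a primitive $\varphi$, each $x\in\mathfrak{sl}_2(\mathbb F_q)$ gives a character $\varphi_x(I+\varpi^{\ell-1}y)=\varphi(\varpi^{\ell-1}\mathrm{tr}(\hat xy))$. An irreducible representation is cuspidal (resp. split semisimple) if its restriction to $K_\ell^{\ell-1}$ contains $\varphi_x$ where the characteristic polynomial of $x$ is irreducible over $\mathbb F_q$ (resp. splits over $\mathbb F_q$ with distinct roots); such $x$ are regular (characteristic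 polynomial = minimal polynomial). *)

theory Defs
  imports "Jordan_Normal_Form.Char_Poly" "HOL-Computational_Algebra.Polynomial_Factorial"
begin

text \<open>The ring o_l is modelled abstractly as a finite commutative ring 'r together with
  an element varpi and a surjective ring homomorphism red onto the residue field 'k
  whose kernel is the ideal generated by varpi, with varpi^l = 0 and varpi^(l-1) \<noteq> 0.\<close>

definition chain_ring_data :: "nat \<Rightarrow> 'r::{comm_ring_1,finite} \<Rightarrow> ('r \<Rightarrow> 'k::{field,finite}) \<Rightarrow> bool" where
  "chain_ring_data l unif red \<longleftrightarrow>
     red 0 = 0 \<and> red 1 = 1 \<and> (\<forall>a b. red (a + b) = red a + red b) \<and>
     (\<forall>a b. red (a * b) = red a * red b) \<and> surj red \<and>
     {a. red a = 0} = {unif * b | b. True} \<and>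
     unif ^ l = 0 \<and> unif ^ (l - 1) \<noteq> 0"

definition SL2 :: "'r::comm_ring_1 mat set" where
  "SL2 = {g \<in> carrier_mat 2 2. det g = 1}"

definition unip :: "'r::comm_ring_1 \<Rightarrow> 'r mat" where
  "unip a = mat 2 2 (\<lambda>(i,j). if i = j then 1 else if i = 0 \<and> j = 1 then a else 0)"

definition tr2 :: "'a::comm_ring_1 mat \<Rightarrow> 'a" where
  "tr2 A = A $$ (0,0) + A $$ (1,1)"

definition add_char :: "('r::comm_ring_1 \<Rightarrow> complex) \<Rightarrow> bool" where
  "add_char \<psi> \<longleftrightarrow> (\<forall>a b. \<psi> (a + b) = \<psi> a * \<psi> b) \<and> (\<forall>a. \<psi> a \<noteq> 0)"

definition primitive_char :: "nat \<Rightarrow> 'r::comm_ring_1 \<Rightarrow> ('r \<Rightarrow> complex) \<Rightarrow> bool" where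
  "primitive_char l unif \<psi> \<longleftrightarrow> add_char \<psi> \<and> (\<exists>a. \<psi> (unif ^ (l - 1) * a) \<noteq> 1)"

definition is_rep :: "nat \<Rightarrow> ('r::comm_ring_1 mat \<Rightarrow> complex mat) \<Rightarrow> bool" where
  "is_rep n \<rho> \<longleftrightarrow> (\<forall>g\<in>SL2. \<rho> g \<in> carrier_mat n n) \<and> \<rho> (1\<^sub>m 2) = 1\<^sub>m n \<and>
     (\<forall>g\<in>SL2. \<forall>h\<in>SL2. \<rho> (g * h) = \<rho> g * \<rho> h)"

definition invariant_subspace :: "nat \<Rightarrow> ('r::comm_ring_1 mat \<Rightarrow> complex mat) \<Rightarrow> complex vec set \<Rightarrow> bool" where
  "invariant_subspace n \<rho> W \<longleftrightarrow> W \<subseteq> carrier_vec n \<and> 0\<^sub>v n \<in> W \<and>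
     (\<forall>v\<in>W. \<forall>w\<in>W. v + w \<in> W) \<and> (\<forall>c. \<forall>v\<in>W. c \<cdot>\<^sub>v v \<in> W) \<and>
     (\<forall>g\<in>SL2. \<forall>v\<in>W. \<rho> g *\<^sub>v v \<in> W)"

definition irreducible_rep :: "nat \<Rightarrow> ('r::comm_ring_1 mat \<Rightarrow> complex mat) \<Rightarrow> bool" where
  "irreducible_rep n \<rho> \<longleftrightarrow> is_rep n \<rho> \<and> n > 0 \<and>
     (\<forall>W. invariant_subspace n \<rho> W \<longrightarrow> W = {0\<^sub>v n} \<or> W = carrier_vec n)"

text \<open>The restriction of rho to K_l^{l-1} = {I + varpi^(l-1) y} contains the character
  phi_x(I + varpi^(l-1) y) = phi(varpi^(l-1) tr(xhat y)), xhat a lift of x in sl_2(F_q).\<close>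
definition contains_phi_x :: "nat \<Rightarrow> 'r::{comm_ring_1,finite} \<Rightarrow> ('r \<Rightarrow> 'k::{field,finite}) \<Rightarrow>
    ('r \<Rightarrow> complex) \<Rightarrow> nat \<Rightarrow> ('r mat \<Rightarrow> complex mat) \<Rightarrow> 'k mat \<Rightarrow> bool" where
  "contains_phi_x l unif red \<phi> n \<rho> x \<longleftrightarrow>
     (\<exists>xh \<in> carrier_mat 2 2. map_mat red xh = x \<and>
       (\<exists>v \<in> carrier_vec n. v \<noteq> 0\<^sub>v n \<and>
          (\<forall>y \<in> carrier_mat 2 2. 1\<^sub>m 2 + unif ^ (l - 1) \<cdot>\<^sub>m y \<in> SL2 \<longrightarrow>
             \<rho> (1\<^sub>m 2 + unif ^ (l - 1) \<cdot>\<^sub>m y) *\<^sub>v v = \<phi> (unif ^ (l - 1) * tr2 (xh * y)) \<cdot>\<^sub>v v)))"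

definition sl2_elt :: "'k::field mat \<Rightarrow> bool" where
  "sl2_elt x \<longleftrightarrow> x \<in> carrier_mat 2 2 \<and> tr2 x = 0"

definition cuspidal :: "nat \<Rightarrow> 'r::{comm_ring_1,finite} \<Rightarrow> ('r \<Rightarrow> 'k::{field,finite}) \<Rightarrow>
    ('r \<Rightarrow> complex) \<Rightarrow> nat \<Rightarrow> ('r mat \<Rightarrow> complex mat) \<Rightarrow> bool" where
  "cuspidal l unif red \<phi> n \<rho> \<longleftrightarrow>
     (\<exists>x. sl2_elt x \<and> irreducible (char_poly x) \<and> contains_phi_x l unif red \<phi> n \<rho> x)"

definition split_semisimple :: "nat \<Rightarrow> 'r::{comm_ring_1,finite} \<Rightarrow> ('r \<Rightarrow> 'k::{field,finite}) \<Rightarrow>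
    ('r \<Rightarrow> complex) \<Rightarrow> nat \<Rightarrow> ('r mat \<Rightarrow> complex mat) \<Rightarrow> bool" where
  "split_semisimple l unif red \<phi> n \<rho> \<longleftrightarrow>
     (\<exists>x. sl2_elt x \<and> (\<exists>a b. a \<noteq> b \<and> char_poly x = [:-a, 1:] * [:-b, 1:]) \<and>
          contains_phi_x l unif red \<phi> n \<rho> x)"

text \<open>Hom(pi, Ind_U^G theta) \<noteq> 0, where Ind_U^G theta is the space of functions f on SL2
  with f(u g) = theta(u) f(g), G acting by right translation; theta(unip a) = psi a.\<close>
definition has_whittaker_model :: "('r::comm_ring_1 \<Rightarrow> complex) \<Rightarrow> nat \<Rightarrow> ('r mat \<Rightarrow> complex mat) \<Rightarrow> bool" where
  "has_whittaker_model \<psi> n \<rho> \<longleftrightarrow>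
     (\<exists>T :: complex vec \<Rightarrow> 'r mat \<Rightarrow> complex.
        (\<forall>v\<in>carrier_vec n. \<forall>w\<in>carrier_vec n. \<forall>x\<in>SL2. T (v + w) x = T v x + T w x) \<and>
        (\<forall>c. \<forall>v\<in>carrier_vec n. \<forall>x\<in>SL2. T (c \<cdot>\<^sub>v v) x = c * T v x) \<and>
        (\<forall>v\<in>carrier_vec n. \<forall>a. \<forall>x\<in>SL2. T v (unip a * x) = \<psi> a * T v x) \<and>
        (\<forall>v\<in>carrier_vec n. \<forall>g\<in>SL2. \<forall>x\<in>SL2. T (\<rho> g *\<^sub>v v) x = T v (x * g)) \<and>
        (\<exists>v\<in>carrier_vec n. \<exists>x\<in>SL2. T v x \<noteq> 0))"

end

theory Submission
  imports Defs
begin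

lemma det2: assumes "(A::'a::comm_ring_1 mat) \<in> carrier_mat 2 2"
  shows "det A = A$$(0,0)*A$$(1,1) - A$$(0,1)*A$$(1,0)"
proof -
  have "det A = (\<Sum>j<2. A $$ (0,j) * cofactor A 0 j)" by (rule laplace_expansion_row[OF assms]) simp
  also have "\<dots> = A$$(0,0)*A$$(1,1) - A$$(0,1)*A$$(1,0)"
    using assms by (simp add: numeral_2_eq_2 cofactor_def det_single mat_delete_def insert_index_def)
  finally show ?thesis .
qed

definition m2 :: "'a \<Rightarrow> 'a \<Rightarrow> 'a \<Rightarrow> 'a \<Rightarrow> 'a mat" where
  "m2 a b c d = mat 2 2 (\<lambda>(i,j). if i = 0 then (if j = 0 then a else b) else (if j = 0 then c else d))"

lemma m2_carrier[simp]: "m2 a b c d \<in> carrier_mat 2 2" by (simp add: m2_def)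
lemma m2_dim[simp]: "dim_row (m2 a b c d) = 2" "dim_col (m2 a b c d) = 2" by (simp_all add: m2_def)
lemma m2_idx[simp]: "m2 a b c d $$ (0,0) = a" "m2 a b c d $$ (0,1) = b"
   "m2 a b c d $$ (1,0) = c" "m2 a b c d $$ (1,1) = d"
   "m2 a b c d $$ (0,Suc 0) = b"
   "m2 a b c d $$ (Suc 0,0) = c" "m2 a b c d $$ (Suc 0,Suc 0) = d" by (simp_all add: m2_def)

lemma less2: "(i::nat) < 2 \<longleftrightarrow> i = 0 \<or> i = 1" by auto

lemma mat2_eq: assumes "A \<in> carrier_mat 2 2"
  shows "A = m2 (A$$(0,0)) (A$$(0,1)) (A$$(1,0)) (A$$(1,1))"
  using assms by (auto simp: m2_def less2 intro!: eq_matI)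

lemma m2_eq_iff: "m2 a b c d = m2 a' b' c' d' \<longleftrightarrow> a = a' \<and> b = b' \<and> c = c' \<and> d = d'"
  by (metis m2_idx)

lemma m2_mult: "m2 a b c d * m2 (e::'a::comm_ring_1) f g h =
   m2 (a*e+b*g) (a*f+b*h) (c*e+d*g) (c*f+d*h)"
  by (auto simp: m2_def less2 scalar_prod_def numeral_2_eq_2 intro!: eq_matI)

lemma m2_add: "m2 a b c d + m2 (e::'a::comm_ring_1) f g h = m2 (a+e) (b+f) (c+g) (d+h)"
  by (auto simp: m2_def less2 intro!: eq_matI)

lemma m2_smult: "k \<cdot>\<^sub>m m2 a b c (d::'a::comm_ring_1) = m2 (k*a) (k*b) (k*c) (k*d)"
  by (auto simp: m2_def less2 intro!: eq_matI)

lemma one_m2: "(1\<^sub>m 2 :: 'a::comm_ring_1 mat) = m2 1 0 0 1"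
  by (auto simp: m2_def less2 intro!: eq_matI)

lemma unip_m2: "unip a = m2 1 a 0 1"
  by (auto simp: m2_def unip_def less2 intro!: eq_matI)

lemma det_m2: "det (m2 a b c (d::'a::comm_ring_1)) = a*d - b*c"
  by (simp add: det2)

lemma m2_SL2: "m2 a b c (d::'a::comm_ring_1) \<in> SL2 \<longleftrightarrow> a*d - b*c = 1"
  by (simp add: SL2_def det_m2)

lemma tr2_m2: "tr2 (m2 a b c d) = a + d" by (simp add: tr2_def)

lemma SL2_mult: "g \<in> SL2 \<Longrightarrow> h \<in> SL2 \<Longrightarrow> g * h \<in> SL2"
  by (auto simp: SL2_def det_mult)

lemma unip_SL2[simp]: "unip a \<in> SL2" by (simp add: unip_m2 m2_SL2)
lemma one_SL2: "1\<^sub>m 2 \<in> SL2" by (simp add: SL2_def)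

lemma unip_add: "unip a * unip b = unip (a + b)" by (simp add: unip_m2 m2_mult add.commute)
lemma unip_0: "unip 0 = 1\<^sub>m 2" by (simp add: unip_m2 one_m2)

lemma char0: "add_char \<chi> \<Longrightarrow> \<chi> 0 = 1"
  unfolding add_char_def by (metis add_0 mult_cancel_right1)

lemma char_neg: "add_char \<chi> \<Longrightarrow> \<chi> (- a) * \<chi> a = 1"
  using char0[of \<chi>] unfolding add_char_def by (metis add.left_inverse)

lemma char_add: "add_char \<chi> \<Longrightarrow> \<chi> (a + b) = \<chi> a * \<chi> b"
  unfolding add_char_def by blast

lemma char_scale: "add_char \<chi> \<Longrightarrow> add_char (\<lambda>a. \<chi> (c * a))"
  unfolding add_char_def by (simp add: distrib_left)

lemma char_sum_zero:
  fixes \<chi> :: "'a::{comm_ring_1,finite} \<Rightarrow> complex"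
  assumes "add_char \<chi>" "\<chi> c0 \<noteq> 1" shows "(\<Sum>c\<in>UNIV. \<chi> c) = 0"
proof -
  have "(\<Sum>c\<in>UNIV. \<chi> (c + c0)) = (\<Sum>c\<in>UNIV. \<chi> c)"
    by (rule sum.reindex_bij_witness[of _ "\<lambda>c. c - c0" "\<lambda>c. c + c0"]) auto
  moreover have "(\<Sum>c\<in>UNIV. \<chi> (c + c0)) = \<chi> c0 * (\<Sum>c\<in>UNIV. \<chi> c)"
    using char_add[OF assms(1)] by (simp add: sum_distrib_left mult.commute)
  ultimately have "(\<chi> c0 - 1) * (\<Sum>c\<in>UNIV. \<chi> c) = 0" by (simp add: algebra_simps)
  thus ?thesis using assms(2) by simp
qed

lemma sq_eq_field: "(X::'k::field) * X = Y * Y \<Longrightarrow> X = Y \<or> X = - Y"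
proof -
  assume "X * X = Y * Y"
  hence "(X - Y) * (X + Y) = 0" by (simp add: algebra_simps)
  thus ?thesis by (simp add: eq_neg_iff_add_eq_0)
qed

lemma card_squares:
  defines "S \<equiv> range (\<lambda>X::'k::{field,finite}. X * X)"
  shows "card (UNIV :: 'k set) + 1 \<le> 2 * card S"
proof -
  define r where "r s = (SOME X. X * X = s)" for s :: 'k
  let ?N = "UNIV - {0::'k}"
  let ?h = "\<lambda>X::'k. (X * X, X = r (X * X))"
  have rr: "r (X * X) * r (X * X) = X * X" for X unfolding r_def by (rule someI) auto
  have "inj_on ?h ?N"
  proof (rule inj_onI)
    fix X Y assume "?h X = ?h Y"
    hence e: "X * X = Y * Y" and b: "(X = r (X * X)) = (Y = r (Y * Y))" by auto
    show "X = Y"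
    proof (cases "X = r (X * X)")
      case True thus ?thesis using b e by simp
    next
      case False
      hence "X = - r (X * X)" using sq_eq_field[OF rr[of X, symmetric]] by auto
      moreover have "Y = - r (X * X)" using False b e sq_eq_field[OF rr[of Y, symmetric]] by auto
      ultimately show ?thesis by simp
    qed
  qed
  moreover have "?h ` ?N \<subseteq> (S - {0}) \<times> UNIV" unfolding S_def by auto
  ultimately have "card ?N \<le> card ((S - {0}) \<times> (UNIV :: bool set))"
    by (intro card_inj_on_le) auto
  also have "\<dots> = 2 * card (S - {0})" by (simp add: card_cartesian_product)
  finally have a: "card ?N \<le> 2 * card (S - {0})" .
  have "0 \<in> S" unfolding S_def by auto
  hence "card (S - {0}) = card S - 1" by simp
  moreover have "card ?N = card (UNIV :: 'k set) - 1" by simp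
  moreover have "card S \<ge> 1" using \<open>0 \<in> S\<close> by (metis One_nat_def Suc_leI card_gt_0_iff empty_iff finite)
  moreover have "card (UNIV :: 'k set) \<ge> 1" using card_gt_0_iff[of "UNIV::'k set"] by simp
  ultimately show ?thesis using a by linarith
qed

lemma universal:
  fixes \<alpha> \<beta> \<gamma> \<tau> :: "'k::{field,finite}"
  assumes two: "(2::'k) \<noteq> 0" and D: "\<alpha> * \<alpha> + \<beta> * \<gamma> \<noteq> 0" and t: "\<tau> \<noteq> 0"
  shows "\<exists>c d. \<gamma> * d * d + (2 * \<alpha>) * c * d - \<beta> * c * c = \<tau>"
proof (cases "\<beta> = 0")
  case True
  hence a: "\<alpha> \<noteq> 0" using D by auto
  have "\<gamma> * 1 * 1 + (2 * \<alpha>) * ((\<tau> - \<gamma>) / (2 * \<alpha>)) * 1 - \<beta> * ((\<tau> - \<gamma>) / (2 * \<alpha>)) * ((\<tau> - \<gamma>) / (2 * \<alpha>)) = \<tau>"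
    using True a two by simp
  thus ?thesis by blast
next
  case False
  define Dd where "Dd = \<alpha> * \<alpha> + \<beta> * \<gamma>"
  define S1 where "S1 = range (\<lambda>X::'k. X * X)"
  define S2 where "S2 = (\<lambda>y. Dd * y - \<beta> * \<tau>) ` S1"
  have c1: "card (UNIV :: 'k set) + 1 \<le> 2 * card S1" unfolding S1_def by (rule card_squares)
  have "inj_on (\<lambda>y. Dd * y - \<beta> * \<tau>) S1" using D unfolding Dd_def by (auto intro!: inj_onI)
  hence c2: "card S2 = card S1" unfolding S2_def by (rule card_image)
  have "card S1 + card S2 = card (S1 \<union> S2) + card (S1 \<inter> S2)" by (rule card_Un_Int) auto
  moreover have "card (S1 \<union> S2) \<le> card (UNIV :: 'k set)" by (rule card_mono) auto
  ultimately have "card (S1 \<inter> S2) \<noteq> 0" using c1 c2 by linarith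
  hence "S1 \<inter> S2 \<noteq> {}" by auto
  then obtain X d where Xd: "X * X = Dd * (d * d) - \<beta> * \<tau>" unfolding S1_def S2_def by auto
  define c where "c = (X + \<alpha> * d) / \<beta>"
  have bc: "\<beta> * c = X + \<alpha> * d" unfolding c_def using False by simp
  have "\<beta> * (\<gamma> * d * d + (2 * \<alpha>) * c * d - \<beta> * c * c) =
        \<beta> * \<gamma> * d * d + 2 * \<alpha> * d * (\<beta> * c) - (\<beta> * c) * (\<beta> * c)"
    by (simp add: algebra_simps)
  also have "\<dots> = \<beta> * \<tau>" unfolding bc using Xd unfolding Dd_def by (simp add: algebra_simps)
  finally have "\<gamma> * d * d + (2 * \<alpha>) * c * d - \<beta> * c * c = \<tau>" using False by simp
  thus ?thesis by blast
qed

lemma char_poly_m2: "char_poly (m2 a b c (d::'a::comm_ring_1)) = [:a * d - b * c, - (a + d), 1:]"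
  unfolding char_poly_def
  by (subst det2) (auto simp: char_poly_matrix_def algebra_simps one_pCons)

lemma disc_nonzero:
  fixes x :: "'k::field mat"
  assumes x: "x \<in> carrier_mat 2 2" and tr: "tr2 x = 0"
    and h: "irreducible (char_poly x) \<or> (\<exists>a b. a \<noteq> b \<and> char_poly x = [:-a, 1:] * [:-b, 1:])"
  shows "x $$ (0,0) * x $$ (0,0) + x $$ (0,1) * x $$ (1,0) \<noteq> 0"
proof
  assume D: "x $$ (0,0) * x $$ (0,0) + x $$ (0,1) * x $$ (1,0) = 0"
  have x11: "x $$ (1,1) = - x $$ (0,0)" using tr unfolding tr2_def by (simp add: eq_neg_iff_add_eq_0 add.commute)
  have "char_poly x = [:x $$ (0,0) * x $$ (1,1) - x $$ (0,1) * x $$ (1,0), - (x $$ (0,0) + x $$ (1,1)), 1:]"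
    by (subst mat2_eq[OF x]) (rule char_poly_m2)
  also have "\<dots> = [:0, 0, 1:]"
  proof -
    have e: "x $$ (0,0) * - x $$ (0,0) - x $$ (0,1) * x $$ (1,0) = - (x $$ (0,0) * x $$ (0,0) + x $$ (0,1) * x $$ (1,0))"
      by (simp add: algebra_simps)
    show ?thesis unfolding x11 e D by simp
  qed
  finally have cp: "char_poly x = [:0, 0, 1:]" .
  show False using h
  proof
    assume irr: "irreducible (char_poly x)"
    have "char_poly x = [:0, 1:] * [:0, 1:]" using cp by simp
    hence "is_unit [:0::'k, 1:]" using irreducibleD[OF irr] by blast
    thus False by (simp add: is_unit_poly_iff)
  next
    assume "\<exists>a b. a \<noteq> b \<and> char_poly x = [:-a, 1:] * [:-b, 1:]"
    then obtain a b :: 'k where ab: "a \<noteq> b" "[:0, 0, 1:] = [:-a, 1:] * [:-b, 1:]" using cp by auto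
    hence "(b = 0 \<or> a = 0) \<and> - b = a" by simp
    thus False using ab(1) by auto
  qed
qed

locale cr =
  fixes l :: nat and unif :: "'r::{comm_ring_1,finite}" and red :: "'r \<Rightarrow> 'k::{field,finite}"
  assumes crd: "chain_ring_data l unif red" and l2: "l \<ge> 2" and two: "(2::'k) \<noteq> 0"
begin

lemma red0[simp]: "red 0 = 0" and red1[simp]: "red 1 = 1"
  and red_add[simp]: "red (a + b) = red a + red b" and red_mult[simp]: "red (a * b) = red a * red b"
  and red_surj: "surj red" and red_ker: "red a = 0 \<longleftrightarrow> (\<exists>b. a = unif * b)"
  and unif_l: "unif ^ l = 0" and unif_l1: "unif ^ (l - 1) \<noteq> 0"
  using crd unfolding chain_ring_data_def by (auto simp: set_eq_iff)

lemma red_uminus[simp]: "red (- a) = - red a"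
  using red_add[of a "-a"] by (simp add: eq_neg_iff_add_eq_0 add.commute)

lemma red_diff[simp]: "red (a - b) = red a - red b"
  using red_add[of a "-b"] by simp

lemma red_unif[simp]: "red unif = 0" using red_ker[of unif] by (metis mult.right_neutral)

lemma red_lift: "\<exists>a. red a = y" using red_surj by (metis surjD)

lemma unit_1p: "\<exists>c. (1 + unif * m) * c = 1"
proof -
  define x where "x = - (unif * m)"
  have e: "1 - x ^ l = (1 - x) * (\<Sum>i<l. x ^ i)" by (rule one_diff_power_eq)
  have "x ^ l = (- m) ^ l * unif ^ l" unfolding x_def by (simp add: power_mult_distrib[symmetric] mult.commute)
  hence "x ^ l = 0" using unif_l by simp
  hence "(1 - x) * (\<Sum>i<l. x ^ i) = 1" using e by simp
  moreover have "1 - x = 1 + unif * m" unfolding x_def by simp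
  ultimately show ?thesis by metis
qed

lemma unit_red: assumes "red a \<noteq> 0" shows "\<exists>b. a * b = 1"
proof -
  obtain b0 where b0: "red b0 = inverse (red a)" using red_lift by blast
  have "red (a * b0 - 1) = 0" using assms b0 by simp
  then obtain m where "a * b0 - 1 = unif * m" using red_ker by blast
  hence "a * b0 = 1 + unif * m" by (simp add: algebra_simps)
  moreover obtain c where "(1 + unif * m) * c = 1" using unit_1p by blast
  ultimately show ?thesis by (intro exI[of _ "b0 * c"]) (simp add: mult.assoc[symmetric])
qed

lemma unif_l1_red: assumes "red a = red b" shows "unif ^ (l - 1) * a = unif ^ (l - 1) * b"
proof -
  have "red (a - b) = 0" using assms by simp
  then obtain m where "a - b = unif * m" using red_ker by blast
  hence "unif ^ (l - 1) * (a - b) = unif ^ (l - 1) * unif * m" by (simp add: mult.assoc)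
  also have "unif ^ (l - 1) * unif = unif ^ l"
  proof -
    have "l = Suc (l - 1)" using l2 by simp
    hence "unif ^ l = unif ^ Suc (l - 1)" by (rule arg_cong)
    thus ?thesis by (simp only: power_Suc2)
  qed
  finally show ?thesis using unif_l by (simp add: algebra_simps)
qed

lemma unif_l1_red0: assumes "red a = 0" shows "unif ^ (l - 1) * a = 0"
  using unif_l1_red[of a 0] assms by simp

lemma divides_top: assumes "a \<noteq> 0" shows "\<exists>c. c * a = unif ^ (l - 1) * x"
proof -
  define J where "J = {j. j \<le> l \<and> (\<exists>b. a = unif ^ j * b)}"
  have fin: "finite J" unfolding J_def by simp
  have "0 \<in> J" unfolding J_def by auto
  define j where "j = Max J"
  have jJ: "j \<in> J" unfolding j_def using fin \<open>0 \<in> J\<close> by (intro Max_in) auto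
  then obtain b where b: "a = unif ^ j * b" and jl: "j \<le> l" unfolding J_def by auto
  have "j \<noteq> l" using b assms unif_l by auto
  hence jl': "j < l" using jl by simp
  have "red b \<noteq> 0"
  proof
    assume "red b = 0"
    then obtain b' where "b = unif * b'" using red_ker by blast
    hence "a = unif ^ Suc j * b'" using b by (simp add: mult.assoc)
    hence "Suc j \<in> J" unfolding J_def using jl' by auto
    hence "Suc j \<le> j" unfolding j_def by (rule Max_ge[OF fin])
    thus False by simp
  qed
  then obtain b' where bb: "b * b' = 1" using unit_red by blast
  have "unif ^ (l - 1 - j) * x * b' * a = unif ^ (l - 1 - j) * unif ^ j * x * (b * b')"
    unfolding b by (simp only: ac_simps)
  also have "unif ^ (l - 1 - j) * unif ^ j = unif ^ (l - 1)"
    using jl' by (simp only: power_add[symmetric]) simp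
  also have "(b * b') = 1" by (rule bb)
  finally show ?thesis by auto
qed

lemma sqrt_1: assumes "red c = 1" shows "\<exists>t. t * t = c \<and> red t = 1"
proof -
  let ?S = "{t. red t = 1}"
  have inj: "inj_on (\<lambda>t. t * t) ?S"
  proof (rule inj_onI)
    fix t s assume t: "t \<in> ?S" and s: "s \<in> ?S" and e: "t * t = s * s"
    have "red (t + s) \<noteq> 0" using t s two by simp
    then obtain u where u: "(t + s) * u = 1" using unit_red by blast
    have "(t - s) * (t + s) = t * t - s * s" by (simp add: algebra_simps)
    hence "(t - s) * (t + s) = 0" using e by simp
    hence "(t - s) * ((t + s) * u) = 0" by (simp only: mult.assoc[symmetric]) simp
    hence "t - s = 0" using u by simp
    thus "t = s" by simp
  qed
  have "(\<lambda>t. t * t) ` ?S = ?S" by (rule endo_inj_surj) (use inj in auto)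
  moreover have "c \<in> ?S" using assms by simp
  ultimately have "c \<in> (\<lambda>t. t * t) ` ?S" by simp
  then obtain t where "t \<in> ?S" "c = t * t" by (rule imageE)
  thus ?thesis by auto
qed

lemma prim_sum: assumes "primitive_char l unif \<psi>" "a \<noteq> 0"
  shows "(\<Sum>c\<in>UNIV. \<psi> (c * a)) = 0"
proof -
  have ch: "add_char \<psi>" using assms(1) unfolding primitive_char_def by blast
  obtain x0 where x0: "\<psi> (unif ^ (l - 1) * x0) \<noteq> 1" using assms(1) unfolding primitive_char_def by blast
  obtain c where "c * a = unif ^ (l - 1) * x0" using divides_top[OF assms(2)] by blast
  hence "(\<lambda>c. \<psi> (a * c)) c \<noteq> 1" using x0 by (simp add: mult.commute)
  from char_sum_zero[OF char_scale[OF ch] this] show ?thesis by (simp add: mult.commute)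
qed

lemma prim_level: assumes "primitive_char l unif \<psi>" "\<forall>b. \<psi> (unif ^ (l - 1) * (c * b)) = 1"
  shows "red c = 0"
proof (rule ccontr)
  assume "red c \<noteq> 0"
  then obtain c' where cc: "c * c' = 1" using unit_red by blast
  obtain x0 where x0: "\<psi> (unif ^ (l - 1) * x0) \<noteq> 1" using assms(1) unfolding primitive_char_def by blast
  have "\<psi> (unif ^ (l - 1) * (c * (c' * x0))) = 1" using assms(2) by blast
  thus False using x0 cc by (simp add: mult.assoc[symmetric])
qed

end

locale rr = cr l unif red for l unif and red :: "'r::{comm_ring_1,finite} \<Rightarrow> 'k::{field,finite}" +
  fixes n :: nat and \<rho> :: "'r mat \<Rightarrow> complex mat"
  assumes rep: "is_rep n \<rho>"
begin

lemma rho_carrier[simp]: "g \<in> SL2 \<Longrightarrow> \<rho> g \<in> carrier_mat n n"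
  using rep unfolding is_rep_def by blast

lemma rho_mult: "g \<in> SL2 \<Longrightarrow> h \<in> SL2 \<Longrightarrow> \<rho> (g * h) = \<rho> g * \<rho> h"
  using rep unfolding is_rep_def by blast

lemma rho_one: "\<rho> (1\<^sub>m 2) = 1\<^sub>m n"
  using rep unfolding is_rep_def by blast

lemma rho_dim[simp]: "g \<in> SL2 \<Longrightarrow> dim_row (\<rho> g) = n" "g \<in> SL2 \<Longrightarrow> dim_col (\<rho> g) = n"
  using rho_carrier[of g] by (auto simp del: rho_carrier)

lemma mv_carrier[simp]: "g \<in> SL2 \<Longrightarrow> \<rho> g *\<^sub>v w \<in> carrier_vec n"
  using rho_carrier[of g] by (metis carrier_matD(1) carrier_vec_dim_vec dim_mult_mat_vec)

lemma rho_mv: "g \<in> SL2 \<Longrightarrow> h \<in> SL2 \<Longrightarrow> w \<in> carrier_vec n \<Longrightarrow>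
   \<rho> g *\<^sub>v (\<rho> h *\<^sub>v w) = \<rho> (g * h) *\<^sub>v w"
  by (simp add: rho_mult assoc_mult_mat_vec[symmetric, of _ n n _ n])

lemma rho_one_mv: "w \<in> carrier_vec n \<Longrightarrow> \<rho> (1\<^sub>m 2) *\<^sub>v w = w"
  by (simp add: rho_one)

definition Pv :: "('r \<Rightarrow> complex) \<Rightarrow> complex vec \<Rightarrow> complex vec" where
  "Pv \<chi> w = vec n (\<lambda>i. \<Sum>a\<in>UNIV. \<chi> (- a) * (\<rho> (unip a) *\<^sub>v w) $ i)"

lemma Pv_carrier[simp]: "Pv \<chi> w \<in> carrier_vec n" by (simp add: Pv_def)
lemma Pv_dim[simp]: "dim_vec (Pv \<chi> w) = n" by (simp add: Pv_def)

lemma mv_idx: assumes "M \<in> carrier_mat n n" "V \<in> carrier_vec n" "i < n"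
  shows "(M *\<^sub>v V) $ i = (\<Sum>j<n. M $$ (i, j) * V $ j)"
  using assms by (simp add: scalar_prod_def lessThan_atLeast0)

lemma Pv_unip: assumes "add_char \<chi>" "w \<in> carrier_vec n"
  shows "Pv \<chi> (\<rho> (unip b) *\<^sub>v w) = \<chi> b \<cdot>\<^sub>v Pv \<chi> w"
proof (rule eq_vecI)
  fix i assume i: "i < dim_vec (\<chi> b \<cdot>\<^sub>v Pv \<chi> w)"
  hence i: "i < n" by simp
  have "Pv \<chi> (\<rho> (unip b) *\<^sub>v w) $ i = (\<Sum>a\<in>UNIV. \<chi> (- a) * (\<rho> (unip (a + b)) *\<^sub>v w) $ i)"
    using i assms by (simp add: Pv_def rho_mv unip_SL2 unip_add)
  also have "\<dots> = (\<Sum>a\<in>UNIV. \<chi> (- (a - b)) * (\<rho> (unip a) *\<^sub>v w) $ i)"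
    by (rule sum.reindex_bij_witness[of _ "\<lambda>a. a - b" "\<lambda>a. a + b"]) auto
  also have "\<dots> = (\<Sum>a\<in>UNIV. \<chi> b * (\<chi> (- a) * (\<rho> (unip a) *\<^sub>v w) $ i))"
  proof (rule sum.cong[OF refl])
    fix a have "\<chi> (- (a - b)) = \<chi> b * \<chi> (- a)"
      using char_add[OF assms(1), of b "-a"] by simp
    thus "\<chi> (- (a - b)) * (\<rho> (unip a) *\<^sub>v w) $ i = \<chi> b * (\<chi> (- a) * (\<rho> (unip a) *\<^sub>v w) $ i)"
      by (simp add: mult.assoc)
  qed
  also have "\<dots> = (\<chi> b \<cdot>\<^sub>v Pv \<chi> w) $ i" using i by (simp add: Pv_def sum_distrib_left)
  finally show "Pv \<chi> (\<rho> (unip b) *\<^sub>v w) $ i = (\<chi> b \<cdot>\<^sub>v Pv \<chi> w) $ i" .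
qed simp

lemma Pv_smult: assumes "w \<in> carrier_vec n"
  shows "Pv \<chi> (k \<cdot>\<^sub>v w) = k \<cdot>\<^sub>v Pv \<chi> w"
proof (rule eq_vecI)
  fix i assume "i < dim_vec (k \<cdot>\<^sub>v Pv \<chi> w)"
  hence i: "i < n" by simp
  have "\<And>a. \<rho> (unip a) *\<^sub>v (k \<cdot>\<^sub>v w) = k \<cdot>\<^sub>v (\<rho> (unip a) *\<^sub>v w)"
    using assms by (intro mult_mat_vec[of _ n n]) (auto simp: unip_SL2)
  thus "Pv \<chi> (k \<cdot>\<^sub>v w) $ i = (k \<cdot>\<^sub>v Pv \<chi> w) $ i"
    using i unip_SL2 by (simp add: Pv_def sum_distrib_left ac_simps)
qed simp

lemma Pv_add: assumes "u \<in> carrier_vec n" "w \<in> carrier_vec n"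
  shows "Pv \<chi> (u + w) = Pv \<chi> u + Pv \<chi> w"
proof (rule eq_vecI)
  fix i assume "i < dim_vec (Pv \<chi> u + Pv \<chi> w)"
  hence i: "i < n" by simp
  have "\<And>a. \<rho> (unip a) *\<^sub>v (u + w) = \<rho> (unip a) *\<^sub>v u + \<rho> (unip a) *\<^sub>v w"
    using assms by (intro mult_add_distrib_mat_vec[of _ n n]) (auto simp: unip_SL2)
  thus "Pv \<chi> (u + w) $ i = (Pv \<chi> u + Pv \<chi> w) $ i"
    using i unip_SL2 by (simp add: Pv_def sum.distrib distrib_left)
qed simp

lemma mv_Pv: assumes "M \<in> carrier_mat n n" "w \<in> carrier_vec n"
  shows "M *\<^sub>v Pv \<chi> w = vec n (\<lambda>i. \<Sum>a\<in>UNIV. \<chi> (- a) * (M *\<^sub>v (\<rho> (unip a) *\<^sub>v w)) $ i)"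
proof (rule eq_vecI)
  fix i assume "i < dim_vec (vec n (\<lambda>i. \<Sum>a\<in>UNIV. \<chi> (- a) * (M *\<^sub>v (\<rho> (unip a) *\<^sub>v w)) $ i))"
  hence i: "i < n" by simp
  have "(M *\<^sub>v Pv \<chi> w) $ i = (\<Sum>j<n. M $$ (i, j) * (\<Sum>a\<in>UNIV. \<chi> (- a) * (\<rho> (unip a) *\<^sub>v w) $ j))"
    using assms i by (subst mv_idx[OF assms(1) Pv_carrier i]) (simp add: Pv_def)
  also have "\<dots> = (\<Sum>a\<in>UNIV. \<chi> (- a) * (\<Sum>j<n. M $$ (i, j) * (\<rho> (unip a) *\<^sub>v w) $ j))"
    by (simp add: sum_distrib_left ac_simps sum.swap[of _ "{..<n}"])
  also have "\<dots> = (\<Sum>a\<in>UNIV. \<chi> (- a) * (M *\<^sub>v (\<rho> (unip a) *\<^sub>v w)) $ i)"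
    using assms i by (intro sum.cong refl arg_cong2[where f="(*)"] mv_idx[symmetric]) auto
  finally show "(M *\<^sub>v Pv \<chi> w) $ i = vec n (\<lambda>i. \<Sum>a\<in>UNIV. \<chi> (- a) * (M *\<^sub>v (\<rho> (unip a) *\<^sub>v w)) $ i) $ i"
    using i by simp
qed (use assms in simp)

lemma mv_zero: "M \<in> carrier_mat n n \<Longrightarrow> M *\<^sub>v 0\<^sub>v n = (0\<^sub>v n :: complex vec)"
  by (intro eq_vecI) (auto simp: scalar_prod_def)

lemma inner_sum: assumes "primitive_char l unif \<psi>"
  shows "(\<Sum>c\<in>UNIV. \<psi> (c * - a)) = (if a = 0 then of_nat (card (UNIV :: 'r set)) else 0)"
proof (cases "a = 0")
  case True
  have "add_char \<psi>" using assms unfolding primitive_char_def by blast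
  thus ?thesis using True by (simp add: char0)
next
  case False
  hence "- a \<noteq> 0" by simp
  have "(\<Sum>c\<in>UNIV. \<psi> (c * - a)) = 0" using prim_sum[OF assms \<open>- a \<noteq> 0\<close>] .
  thus ?thesis using False by simp
qed

lemma decomp: assumes "primitive_char l unif \<psi>" "w \<in> carrier_vec n" "w \<noteq> 0\<^sub>v n"
  shows "\<exists>c. Pv (\<lambda>a. \<psi> (c * a)) w \<noteq> 0\<^sub>v n"
proof (rule ccontr)
  assume "\<not> ?thesis"
  hence z: "\<And>c. Pv (\<lambda>a. \<psi> (c * a)) w = 0\<^sub>v n" by blast
  have "w = 0\<^sub>v n"
  proof (rule eq_vecI)
    fix i assume "i < dim_vec (0\<^sub>v n :: complex vec)"
    hence i: "i < n" by simp
    have "0 = (\<Sum>c\<in>UNIV. Pv (\<lambda>a. \<psi> (c * a)) w $ i)" using z i by simp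
    also have "\<dots> = (\<Sum>c\<in>UNIV. \<Sum>a\<in>UNIV. \<psi> (c * - a) * (\<rho> (unip a) *\<^sub>v w) $ i)"
      using i by (simp add: Pv_def)
    also have "\<dots> = (\<Sum>a\<in>UNIV. (\<Sum>c\<in>UNIV. \<psi> (c * - a)) * (\<rho> (unip a) *\<^sub>v w) $ i)"
      by (subst sum.swap) (simp add: sum_distrib_right)
    also have "\<dots> = (\<Sum>a\<in>UNIV. (if a = 0 then of_nat (card (UNIV :: 'r set)) * (\<rho> (unip a) *\<^sub>v w) $ i else 0))"
      using inner_sum[OF assms(1)] by (intro sum.cong) auto
    also have "\<dots> = of_nat (card (UNIV :: 'r set)) * w $ i"
      using assms(2) by (simp add: unip_0 rho_one_mv)
    finally have "of_nat (card (UNIV :: 'r set)) * w $ i = 0" by simp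
    thus "w $ i = 0\<^sub>v n $ i" using i by simp
  qed (use assms in simp)
  thus False using assms(3) by simp
qed

lemma eig_match: assumes "add_char \<chi>" "w \<in> carrier_vec n"
   "\<rho> (unip \<beta>) *\<^sub>v w = k \<cdot>\<^sub>v w" "Pv \<chi> w \<noteq> 0\<^sub>v n"
  shows "\<chi> \<beta> = k"
proof -
  have "\<chi> \<beta> \<cdot>\<^sub>v Pv \<chi> w = k \<cdot>\<^sub>v Pv \<chi> w"
    using Pv_unip[OF assms(1,2), of \<beta>] assms(3) Pv_smult[OF assms(2)] by simp
  moreover obtain i where i: "i < n" "Pv \<chi> w $ i \<noteq> 0"
    using assms(4) by (metis Pv_dim eq_vecI index_zero_vec)
  ultimately have "\<chi> \<beta> * Pv \<chi> w $ i = k * Pv \<chi> w $ i"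
    by (metis Pv_dim index_smult_vec(1))
  thus ?thesis using i by simp
qed

lemma torus: assumes "add_char \<psi>" "t * t' = 1" "z \<in> carrier_vec n"
   "Pv (\<lambda>a. \<psi> (t * t * a)) z \<noteq> 0\<^sub>v n"
  shows "Pv \<psi> (\<rho> (m2 t 0 0 t') *\<^sub>v z) \<noteq> 0\<^sub>v n"
proof
  let ?D = "m2 t 0 0 t'" and ?Di = "m2 t' 0 0 t"
  have D: "?D \<in> SL2" "?Di \<in> SL2" using assms(2) by (simp_all add: m2_SL2 mult.commute)
  have DD: "?Di * ?D = 1\<^sub>m 2" using assms(2) by (simp add: m2_mult one_m2 mult.commute)
  have comm: "unip a * ?D = ?D * unip (t' * t' * a)" for a
  proof -
    have "t * (t' * t' * a) = (t * t') * t' * a" by (simp add: ac_simps)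
    thus ?thesis using assms(2) by (simp add: unip_m2 m2_mult mult.commute)
  qed
  assume Z: "Pv \<psi> (\<rho> ?D *\<^sub>v z) = 0\<^sub>v n"
  have "Pv \<psi> (\<rho> ?D *\<^sub>v z) = vec n (\<lambda>i. \<Sum>a\<in>UNIV. \<psi> (- a) * (\<rho> ?D *\<^sub>v (\<rho> (unip (t' * t' * a)) *\<^sub>v z)) $ i)"
    unfolding Pv_def using assms(3) D by (simp add: rho_mv comm)
  also have "\<dots> = vec n (\<lambda>i. \<Sum>a\<in>UNIV. \<psi> (t * t * - a) * (\<rho> ?D *\<^sub>v (\<rho> (unip a) *\<^sub>v z)) $ i)"
  proof (rule arg_cong[where f="vec n"], rule ext)
    fix i
    have e: "t' * t' * (t * t * a) = a" for a
    proof -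
      have "t' * t' * (t * t * a) = (t * t') * (t * t') * a" by (simp add: ac_simps)
      thus ?thesis using assms(2) by simp
    qed
    have e2: "t * t * (t' * t' * a) = a" for a
    proof -
      have "t * t * (t' * t' * a) = (t * t') * (t * t') * a" by (simp add: ac_simps)
      thus ?thesis using assms(2) by simp
    qed
    show "(\<Sum>a\<in>UNIV. \<psi> (- a) * (\<rho> ?D *\<^sub>v (\<rho> (unip (t' * t' * a)) *\<^sub>v z)) $ i) =
          (\<Sum>a\<in>UNIV. \<psi> (t * t * - a) * (\<rho> ?D *\<^sub>v (\<rho> (unip a) *\<^sub>v z)) $ i)"
      by (rule sum.reindex_bij_witness[of _ "\<lambda>a. t * t * a" "\<lambda>a. t' * t' * a"]) (auto simp: e e2)
  qed
  also have "\<dots> = \<rho> ?D *\<^sub>v Pv (\<lambda>a. \<psi> (t * t * a)) z"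
    using mv_Pv[OF rho_carrier[OF D(1)] assms(3)] by simp
  finally have "\<rho> ?Di *\<^sub>v (\<rho> ?D *\<^sub>v Pv (\<lambda>a. \<psi> (t * t * a)) z) = \<rho> ?Di *\<^sub>v 0\<^sub>v n"
    using Z by simp
  hence "Pv (\<lambda>a. \<psi> (t * t * a)) z = 0\<^sub>v n"
    using D by (simp add: rho_mv DD rho_one_mv mv_zero)
  thus False using assms(4) by simp
qed

lemma conj_eig:
  assumes det: "a * d - b * c = 1" and v: "v \<in> carrier_vec n"
    and H: "\<forall>y \<in> carrier_mat 2 2. 1\<^sub>m 2 + unif ^ (l - 1) \<cdot>\<^sub>m y \<in> SL2 \<longrightarrow>
             \<rho> (1\<^sub>m 2 + unif ^ (l - 1) \<cdot>\<^sub>m y) *\<^sub>v v = \<phi> (unif ^ (l - 1) * tr2 (m2 x00 x01 x10 x11 * y)) \<cdot>\<^sub>v v"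
  shows "\<rho> (unip (unif ^ (l - 1) * \<beta>)) *\<^sub>v (\<rho> (m2 a b c d) *\<^sub>v v) =
     \<phi> (unif ^ (l - 1) * (\<beta> * (x10 * d * d + (x00 - x11) * c * d - x01 * c * c))) \<cdot>\<^sub>v (\<rho> (m2 a b c d) *\<^sub>v v)"
proof -
  let ?u = "unif ^ (l - 1)"
  let ?g = "m2 a b c d" and ?gi = "m2 d (-b) (-c) a"
  let ?y = "m2 (\<beta> * (c * d)) (\<beta> * (d * d)) (\<beta> * (- (c * c))) (\<beta> * (- (c * d)))"
  let ?M = "1\<^sub>m 2 + ?u \<cdot>\<^sub>m ?y"
  have det': "d * a - (- b) * (- c) = 1" using det by (simp add: mult.commute)
  have g: "?g \<in> SL2" "?gi \<in> SL2" using det det' by (simp_all only: m2_SL2)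
  have gig: "?gi * ?g = 1\<^sub>m 2"
    unfolding m2_mult one_m2 m2_eq_iff
  proof (intro conjI)
    show "d * a + - b * c = 1" using det' by simp
    show "- c * b + a * d = 1" using det by (simp add: algebra_simps)
  qed (simp_all add: algebra_simps)
  have lc: "X = Y" if "X - Y = k * (a * d - b * c - 1)" for X Y k :: 'r
    using that det by simp
  have key: "unip (?u * \<beta>) * ?g = ?g * ?M"
    unfolding unip_m2 one_m2 m2_smult m2_add m2_mult m2_eq_iff
  proof (intro conjI)
    show "1 * a + ?u * \<beta> * c = a * (1 + ?u * (\<beta> * (c * d))) + b * (0 + ?u * (\<beta> * - (c * c)))"
      by (rule lc[where k="- (?u * \<beta> * c)"]) (simp add: algebra_simps)
    show "1 * b + ?u * \<beta> * d = a * (0 + ?u * (\<beta> * (d * d))) + b * (1 + ?u * (\<beta> * - (c * d)))"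
      by (rule lc[where k="- (?u * \<beta> * d)"]) (simp add: algebra_simps)
  qed (simp_all add: algebra_simps)
  have Mc: "?M \<in> carrier_mat 2 2" by simp
  have "?gi * (unip (?u * \<beta>) * ?g) = ?gi * (?g * ?M)" by (simp only: key)
  also have "\<dots> = (?gi * ?g) * ?M" by (rule assoc_mult_mat[symmetric, OF m2_carrier m2_carrier Mc])
  also have "\<dots> = ?M" using Mc by (simp only: gig left_mult_one_mat)
  finally have "?M = ?gi * (unip (?u * \<beta>) * ?g)" by simp
  hence MS: "?M \<in> SL2" using g by (simp add: SL2_mult)
  have tr: "tr2 (m2 x00 x01 x10 x11 * ?y) = \<beta> * (x10 * d * d + (x00 - x11) * c * d - x01 * c * c)"
    by (simp add: m2_mult tr2_m2 algebra_simps)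
  have "\<rho> (unip (?u * \<beta>)) *\<^sub>v (\<rho> ?g *\<^sub>v v) = \<rho> (unip (?u * \<beta>) * ?g) *\<^sub>v v"
    by (rule rho_mv) (use g v in auto)
  also have "\<dots> = \<rho> (?g * ?M) *\<^sub>v v" by (simp only: key)
  also have "\<dots> = \<rho> ?g *\<^sub>v (\<rho> ?M *\<^sub>v v)" by (rule rho_mv[symmetric]) (use g MS v in auto)
  also have "\<rho> ?M *\<^sub>v v = \<phi> (?u * (\<beta> * (x10 * d * d + (x00 - x11) * c * d - x01 * c * c))) \<cdot>\<^sub>v v"
    using H MS tr by (metis m2_carrier)
  also have "\<rho> ?g *\<^sub>v (\<phi> (?u * (\<beta> * (x10 * d * d + (x00 - x11) * c * d - x01 * c * c))) \<cdot>\<^sub>v v) =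
      \<phi> (?u * (\<beta> * (x10 * d * d + (x00 - x11) * c * d - x01 * c * c))) \<cdot>\<^sub>v (\<rho> ?g *\<^sub>v v)"
    using g v by (intro mult_mat_vec[of _ n n]) auto
  finally show ?thesis .
qed

lemma whit: assumes ch: "add_char \<psi>" and z: "z \<in> carrier_vec n" and nz: "Pv \<psi> z \<noteq> 0\<^sub>v n"
  shows "has_whittaker_model \<psi> n \<rho>"
proof -
  obtain i0 where i0: "i0 < n" "Pv \<psi> z $ i0 \<noteq> 0"
    using nz by (metis Pv_dim eq_vecI index_zero_vec)
  define T where "T v x = Pv \<psi> (\<rho> x *\<^sub>v v) $ i0" for v x
  show ?thesis unfolding has_whittaker_model_def
  proof (intro exI[of _ T] conjI ballI allI)
    fix v w :: "complex vec" and x :: "'r mat" assume v: "v \<in> carrier_vec n" and w: "w \<in> carrier_vec n" and x: "x \<in> SL2"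
    have "\<rho> x *\<^sub>v (v + w) = \<rho> x *\<^sub>v v + \<rho> x *\<^sub>v w"
      using v w x by (intro mult_add_distrib_mat_vec[of _ n n]) auto
    thus "T (v + w) x = T v x + T w x" unfolding T_def using x i0 by (simp add: Pv_add)
  next
    fix c :: complex and v :: "complex vec" and x :: "'r mat" assume v: "v \<in> carrier_vec n" and x: "x \<in> SL2"
    have "\<rho> x *\<^sub>v (c \<cdot>\<^sub>v v) = c \<cdot>\<^sub>v (\<rho> x *\<^sub>v v)"
      using v x by (intro mult_mat_vec[of _ n n]) auto
    thus "T (c \<cdot>\<^sub>v v) x = c * T v x" unfolding T_def using x i0 by (simp add: Pv_smult)
  next
    fix v :: "complex vec" and a :: 'r and x :: "'r mat" assume v: "v \<in> carrier_vec n" and x: "x \<in> SL2"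
    have "\<rho> (unip a * x) *\<^sub>v v = \<rho> (unip a) *\<^sub>v (\<rho> x *\<^sub>v v)"
      using v x by (simp add: rho_mv)
    thus "T v (unip a * x) = \<psi> a * T v x" unfolding T_def using x i0 v by (simp add: Pv_unip[OF ch])
  next
    fix v :: "complex vec" and g x :: "'r mat" assume v: "v \<in> carrier_vec n" and g: "g \<in> SL2" and x: "x \<in> SL2"
    show "T (\<rho> g *\<^sub>v v) x = T v (x * g)" unfolding T_def using v g x by (simp add: rho_mv)
  next
    show "\<exists>v\<in>carrier_vec n. \<exists>x\<in>SL2. T v x \<noteq> 0"
      using z i0 one_SL2 unfolding T_def by (intro bexI[of _ z] bexI[of _ "1\<^sub>m 2"]) (auto simp: rho_one_mv)
  qed
qed

lemma adj_m2: assumes det: "a * d - b * c = (1::'r)"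
  shows "m2 a b c d \<in> SL2" "m2 d (-b) (-c) a \<in> SL2" "m2 d (-b) (-c) a * m2 a b c d = 1\<^sub>m 2"
proof -
  have det': "d * a - (- b) * (- c) = 1" using det by (simp add: mult.commute)
  show "m2 a b c d \<in> SL2" "m2 d (-b) (-c) a \<in> SL2" using det det' by (simp_all only: m2_SL2)
  show "m2 d (-b) (-c) a * m2 a b c d = 1\<^sub>m 2"
    unfolding m2_mult one_m2 m2_eq_iff
  proof (intro conjI)
    show "d * a + - b * c = 1" using det' by simp
    show "- c * b + a * d = 1" using det by (simp add: algebra_simps)
  qed (simp_all add: algebra_simps)
qed

lemma main:
  assumes pphi: "primitive_char l unif \<phi>" and ppsi: "primitive_char l unif \<psi>"
    and v: "v \<in> carrier_vec n" "v \<noteq> 0\<^sub>v n"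
    and H: "\<forall>y \<in> carrier_mat 2 2. 1\<^sub>m 2 + unif ^ (l - 1) \<cdot>\<^sub>m y \<in> SL2 \<longrightarrow>
             \<rho> (1\<^sub>m 2 + unif ^ (l - 1) \<cdot>\<^sub>m y) *\<^sub>v v = \<phi> (unif ^ (l - 1) * tr2 (m2 x00 x01 x10 x11 * y)) \<cdot>\<^sub>v v"
    and tr: "red x00 + red x11 = 0"
    and D: "red x00 * red x00 + red x01 * red x10 \<noteq> 0"
  shows "has_whittaker_model \<psi> n \<rho>"
proof -
  let ?u = "unif ^ (l - 1)"
  define Q where "Q c d = x10 * d * d + (x00 - x11) * c * d - x01 * c * c" for c d
  have chpsi: "add_char \<psi>" using ppsi unfolding primitive_char_def by blast
  have x11: "red x11 = - red x00" using tr by (simp add: eq_neg_iff_add_eq_0 add.commute)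
  have realize: "\<exists>a b c d. a * d - b * c = 1 \<and> red (Q c d) = \<tau>" if tau: "\<tau> \<noteq> 0" for \<tau>
  proof -
    obtain c0 d0 where cd: "red x10 * d0 * d0 + (2 * red x00) * c0 * d0 - red x01 * c0 * c0 = \<tau>"
      using universal[OF two D tau] by blast
    obtain c where c: "red c = c0" using red_lift by blast
    obtain d where d: "red d = d0" using red_lift by blast
    have rQ: "red (Q c d) = \<tau>" unfolding Q_def using cd c d x11 by (simp add: algebra_simps)
    show ?thesis
    proof (cases "red d = 0")
      case False
      then obtain d' where dd: "d * d' = 1" using unit_red by blast
      have "d' * d - 0 * c = 1" using dd by (simp add: mult.commute)
      thus ?thesis using rQ by blast
    next
      case True
      have "red c \<noteq> 0"
      proof
        assume "red c = 0"
        hence "red (Q c d) = 0" using True unfolding Q_def by simp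
        thus False using rQ tau by simp
      qed
      then obtain c' where cc: "c * c' = 1" using unit_red by blast
      have "0 * d - (- c') * c = 1" using cc by (simp add: mult.commute)
      thus ?thesis using rQ by blast
    qed
  qed
  have wg: "\<rho> (m2 a b c d) *\<^sub>v v \<in> carrier_vec n \<and> \<rho> (m2 a b c d) *\<^sub>v v \<noteq> 0\<^sub>v n \<and>
     (\<forall>\<beta>. \<rho> (unip (?u * \<beta>)) *\<^sub>v (\<rho> (m2 a b c d) *\<^sub>v v) = \<phi> (?u * (\<beta> * Q c d)) \<cdot>\<^sub>v (\<rho> (m2 a b c d) *\<^sub>v v))"
    if det: "a * d - b * c = 1" for a b c d
  proof (intro conjI allI)
    note g = adj_m2[OF det]
    show "\<rho> (m2 a b c d) *\<^sub>v v \<in> carrier_vec n" using g by simp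
    show "\<rho> (m2 a b c d) *\<^sub>v v \<noteq> 0\<^sub>v n"
    proof
      assume "\<rho> (m2 a b c d) *\<^sub>v v = 0\<^sub>v n"
      hence "\<rho> (m2 d (-b) (-c) a) *\<^sub>v (\<rho> (m2 a b c d) *\<^sub>v v) = 0\<^sub>v n" using g by (simp add: mv_zero)
      moreover have "\<rho> (m2 d (-b) (-c) a) *\<^sub>v (\<rho> (m2 a b c d) *\<^sub>v v) = v"
        using g v by (simp add: rho_mv rho_one_mv)
      ultimately show False using v by simp
    qed
    fix \<beta>
    show "\<rho> (unip (?u * \<beta>)) *\<^sub>v (\<rho> (m2 a b c d) *\<^sub>v v) = \<phi> (?u * (\<beta> * Q c d)) \<cdot>\<^sub>v (\<rho> (m2 a b c d) *\<^sub>v v)"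
      unfolding Q_def by (rule conj_eig[OF det v(1) H])
  qed
  obtain a1 b1 c1 d1 where g1: "a1 * d1 - b1 * c1 = 1" "red (Q c1 d1) = 1" using realize[of 1] by auto
  let ?w1 = "\<rho> (m2 a1 b1 c1 d1) *\<^sub>v v"
  note w1 = wg[OF g1(1)]
  obtain k1 where P1: "Pv (\<lambda>a. \<psi> (k1 * a)) ?w1 \<noteq> 0\<^sub>v n" using decomp[OF ppsi] w1 by blast
  have A: "\<psi> (k1 * (?u * b)) = \<phi> (?u * b)" for b
  proof -
    have "(\<lambda>a. \<psi> (k1 * a)) (?u * b) = \<phi> (?u * (b * Q c1 d1))"
      using w1 by (intro eig_match[OF char_scale[OF chpsi] _ _ P1]) auto
    moreover have "?u * (b * Q c1 d1) = ?u * b" by (rule unif_l1_red) (simp add: g1(2))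
    ultimately show ?thesis by simp
  qed
  have "red k1 \<noteq> 0"
  proof
    assume k0: "red k1 = 0"
    obtain x0 where x0: "\<phi> (?u * x0) \<noteq> 1" using pphi unfolding primitive_char_def by blast
    have "k1 * (?u * x0) = ?u * (k1 * x0)" by (simp add: ac_simps)
    also have "\<dots> = 0" by (rule unif_l1_red0) (simp add: k0)
    finally have "\<phi> (?u * x0) = \<psi> 0" using A[of x0] by simp
    thus False using x0 char0[OF chpsi] by simp
  qed
  hence "inverse (red k1) \<noteq> 0" by simp
  then obtain a2 b2 c2 d2 where g2: "a2 * d2 - b2 * c2 = 1" "red (Q c2 d2) = inverse (red k1)"
    using realize by blast
  let ?w2 = "\<rho> (m2 a2 b2 c2 d2) *\<^sub>v v"
  note w2 = wg[OF g2(1)]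
  obtain k2 where P2: "Pv (\<lambda>a. \<psi> (k2 * a)) ?w2 \<noteq> 0\<^sub>v n" using decomp[OF ppsi] w2 by blast
  have B: "\<psi> (k2 * (?u * b)) = \<psi> (?u * b)" for b
  proof -
    have "(\<lambda>a. \<psi> (k2 * a)) (?u * b) = \<phi> (?u * (b * Q c2 d2))"
      using w2 by (intro eig_match[OF char_scale[OF chpsi] _ _ P2]) auto
    also have "\<dots> = \<psi> (k1 * (?u * (b * Q c2 d2)))" by (rule A[symmetric])
    also have "k1 * (?u * (b * Q c2 d2)) = ?u * (b * (k1 * Q c2 d2))" by (simp add: ac_simps)
    also have "\<dots> = ?u * b" by (rule unif_l1_red) (use g2(2) \<open>red k1 \<noteq> 0\<close> in simp)
    finally show ?thesis by simp
  qed
  have "red (k2 - 1) = 0"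
  proof (rule prim_level[OF ppsi], rule allI)
    fix b
    have e: "?u * ((k2 - 1) * b) = k2 * (?u * b) + - (?u * b)" by (simp add: algebra_simps)
    have "\<psi> (?u * ((k2 - 1) * b)) = \<psi> (k2 * (?u * b) + - (?u * b))" by (simp only: e)
    also have "\<dots> = \<psi> (k2 * (?u * b)) * \<psi> (- (?u * b))" by (rule char_add[OF chpsi])
    also have "\<dots> = \<psi> (?u * b) * \<psi> (- (?u * b))" by (simp only: B)
    also have "\<dots> = 1" using char_neg[OF chpsi, of "?u * b"] by (simp add: mult.commute)
    finally show "\<psi> (?u * ((k2 - 1) * b)) = 1" .
  qed
  hence "red k2 = 1" by simp
  then obtain t where t: "t * t = k2" "red t = 1" using sqrt_1 by blast
  then obtain t' where tt: "t * t' = 1" using unit_red by fastforce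
  have "Pv (\<lambda>a. \<psi> (t * t * a)) ?w2 \<noteq> 0\<^sub>v n" using P2 t(1) by simp
  hence Z: "Pv \<psi> (\<rho> (m2 t 0 0 t') *\<^sub>v ?w2) \<noteq> 0\<^sub>v n"
    using w2 by (intro torus[OF chpsi tt]) auto
  have "m2 t 0 0 t' \<in> SL2" using tt by (simp add: m2_SL2)
  hence "\<rho> (m2 t 0 0 t') *\<^sub>v ?w2 \<in> carrier_vec n" by simp
  thus ?thesis by (rule whit[OF chpsi _ Z])
qed

end

theorem corollary5p3:
  fixes unif :: "'r::{comm_ring_1,finite}" and red :: "'r \<Rightarrow> 'k::{field,finite}"
    and l n :: nat and p :: nat and \<phi> :: "'r \<Rightarrow> complex" and \<rho> :: "'r mat \<Rightarrow> complex mat"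
  assumes "chain_ring_data l unif red"
    and "CHAR('k) = p" and "odd p"
    and "l \<ge> 2"
    and "primitive_char l unif \<phi>"
    and "irreducible_rep n \<rho>"
    and "cuspidal l unif red \<phi> n \<rho> \<or> split_semisimple l unif red \<phi> n \<rho>"
  shows "\<forall>\<psi>. primitive_char l unif \<psi> \<longrightarrow> has_whittaker_model \<psi> n \<rho>"
proof (intro allI impI)
  fix \<psi> assume ppsi: "primitive_char l unif \<psi>"
  have two: "(2::'k) \<noteq> 0"
  proof
    assume "(2::'k) = 0"
    hence "of_nat 2 = (0::'k)" by simp
    hence "p dvd 2" using assms(2) by (simp only: of_nat_eq_0_iff_char_dvd)
    hence p2: "p \<le> 2" "p \<noteq> 0" by (simp add: dvd_imp_le, metis dvd_0_left_iff zero_neq_numeral)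
    have "p \<noteq> 2" using assms(3) by auto
    hence "p = 1" using p2 by linarith
    hence "of_nat 1 = (0::'k)" using assms(2) by (simp only: of_nat_eq_0_iff_char_dvd) simp
    thus False by simp
  qed
  interpret rr l unif red n \<rho>
    using assms(1,4,6) two by unfold_locales (auto simp: irreducible_rep_def)
  obtain x where x: "sl2_elt x" and h: "irreducible (char_poly x) \<or> (\<exists>a b. a \<noteq> b \<and> char_poly x = [:-a, 1:] * [:-b, 1:])"
    and cx: "contains_phi_x l unif red \<phi> n \<rho> x"
    using assms(7) unfolding cuspidal_def split_semisimple_def by blast
  obtain xh v where xhc: "xh \<in> carrier_mat 2 2" and xx: "map_mat red xh = x"
    and v: "v \<in> carrier_vec n" "v \<noteq> 0\<^sub>v n"
    and H: "\<forall>y \<in> carrier_mat 2 2. 1\<^sub>m 2 + unif ^ (l - 1) \<cdot>\<^sub>m y \<in> SL2 \<longrightarrow>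
             \<rho> (1\<^sub>m 2 + unif ^ (l - 1) \<cdot>\<^sub>m y) *\<^sub>v v = \<phi> (unif ^ (l - 1) * tr2 (xh * y)) \<cdot>\<^sub>v v"
    using cx unfolding contains_phi_x_def by blast
  have eq: "xh = m2 (xh $$ (0,0)) (xh $$ (0,1)) (xh $$ (1,0)) (xh $$ (1,1))" by (rule mat2_eq[OF xhc])
  have H': "\<forall>y \<in> carrier_mat 2 2. 1\<^sub>m 2 + unif ^ (l - 1) \<cdot>\<^sub>m y \<in> SL2 \<longrightarrow>
             \<rho> (1\<^sub>m 2 + unif ^ (l - 1) \<cdot>\<^sub>m y) *\<^sub>v v =
     \<phi> (unif ^ (l - 1) * tr2 (m2 (xh $$ (0,0)) (xh $$ (0,1)) (xh $$ (1,0)) (xh $$ (1,1)) * y)) \<cdot>\<^sub>v v"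
    using H by (simp only: eq[symmetric])
  have xc: "x \<in> carrier_mat 2 2" using x unfolding sl2_elt_def by blast
  have xe: "x $$ (i, j) = red (xh $$ (i, j))" if "i < 2" "j < 2" for i j
    using that xhc xx[symmetric] by auto
  have tr: "red (xh $$ (0,0)) + red (xh $$ (1,1)) = 0"
    using x unfolding sl2_elt_def tr2_def by (simp add: xe)
  have D: "red (xh $$ (0,0)) * red (xh $$ (0,0)) + red (xh $$ (0,1)) * red (xh $$ (1,0)) \<noteq> 0"
    using disc_nonzero[OF xc _ h] x unfolding sl2_elt_def by (simp add: xe)
  show "has_whittaker_model \<psi> n \<rho>"
    by (rule main[OF assms(5) ppsi v H' tr D])
qed

end
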